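(* Let $(H,p)$ be a pivotal Hopf monoid in a symmetric monoidal category $\mathcal C$, $\Gamma$ a directed ribbon graph with edge set $E$ and $\alpha\in E$. Then: 1. $(H^{\otimes E},\rhd_{\alpha+},\delta_{\alpha+})$ and $(H^{\otimes E},\rhd_{\alpha-},\delta_{\alpha-})$ are left-left $H$-Hopf modules, i.e. $\delta\circ\rhd=(m\otimes\rhd)\circ(1_H\otimes\tau_{H,H}\otimes1_{H^{\otimes E}})\circ(\Delta\otimes\delta)$ for $(\rhd,\delta)=(\rhd_{\alpha\pm},\delta_{\alpha\pm})$; 2. $\rhd_{\alpha-}\circ(1_H\otimes\rhd_{\alpha+})=\rhd_{\alpha+}\circ(1_H\otimes\rhd_{\alpha-})\circ(\tau_{H,H}\otimes1_{H^{\otimes E}})$ and $(1_H\otimes\delta_{\alpha-})\circ\delta_{\alpha+}=(\tau_{H,H}\otimes1_{H^{\otimes E}})\circ(1_H\otimes\delta_{\alpha+})\circ\delta_{\alpha-}$.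
   Context: $\mathcal C$ symmetric monoidal (unit $e$, symmetry $\tau$); $H$ a Hopf monoid ($m,\eta,\Delta,\epsilon,S$); pivotal: $p:e\to H$ with $\Delta\circ p=p\otimes p$, $\epsilon\circ p=1_e$, $m\circ(m\otimes1)\circ(1\otimes S^2\otimes S)\circ(p\otimes1\otimes p)=1_H$; $T:=m\circ(p\otimes S)$. Sweedler notation is shorthand for composites in $\mathcal C$. A directed ribbon graph is a finite directed graph with edge set $E$ (plus cyclic orderings at vertices). $H^{\otimes E}$ is the tensor product of copies of $H$ indexed by $E$ (the copy of $\alpha$ being its label). For $\alpha\in E$ with label $a$ (other labels unchanged): $\rhd_{\alpha+}:H\otimes H^{\otimes E}\to H^{\otimes E}$, $h\otimes(\dots a\dots)\mapsto(\dots ha\dots)$; $\rhd_{\alpha-}$: $a\mapsto T(hT(a))$; $\delta_{\alpha+}:H^{\otimes E}\to H\otimes H^{\otimes E}$, $(\dots a\dots)\mapsto a_{(1)}\otimes(\dots a_{(2)}\dots)$; $\delta_{\alpha-}$: $(\dots a\dots)\mapsto T(a)_{(1)}\otimes(\dots T(T(a)_{(2)})\dots)$. *)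

theory Defs
  imports Main
begin

text \<open>A strict symmetric monoidal category, presented by its data:
objects (predicate c_ob), morphisms (predicate c_ar), domain/codomain,
identities, composition (c_cmp g f = g after f), tensor on objects and
morphisms, unit object and symmetry.\<close>

record ('o, 'm) smcat =
  c_ob  :: "'o \<Rightarrow> bool"
  c_ar  :: "'m \<Rightarrow> bool"
  c_dom :: "'m \<Rightarrow> 'o"
  c_cod :: "'m \<Rightarrow> 'o"
  c_id  :: "'o \<Rightarrow> 'm"
  c_cmp :: "'m \<Rightarrow> 'm \<Rightarrow> 'm"
  c_tob :: "'o \<Rightarrow> 'o \<Rightarrow> 'o"
  c_tar :: "'m \<Rightarrow> 'm \<Rightarrow> 'm"
  c_unit :: "'o"
  c_sym :: "'o \<Rightarrow> 'o \<Rightarrow> 'm"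

definition c_hom :: "('o, 'm) smcat \<Rightarrow> 'm \<Rightarrow> 'o \<Rightarrow> 'o \<Rightarrow> bool" where
  "c_hom C f a b \<longleftrightarrow> c_ar C f \<and> c_ob C a \<and> c_ob C b \<and> c_dom C f = a \<and> c_cod C f = b"

definition strict_smc :: "('o, 'm) smcat \<Rightarrow> bool" where
  "strict_smc C \<longleftrightarrow>
    \<comment> \<open>category\<close>
    (\<forall>f. c_ar C f \<longrightarrow> c_ob C (c_dom C f) \<and> c_ob C (c_cod C f)) \<and>
    (\<forall>a. c_ob C a \<longrightarrow> c_hom C (c_id C a) a a) \<and>
    (\<forall>f g. c_ar C f \<and> c_ar C g \<and> c_cod C f = c_dom C g \<longrightarrow>
        c_hom C (c_cmp C g f) (c_dom C f) (c_cod C g)) \<and>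
    (\<forall>f. c_ar C f \<longrightarrow> c_cmp C f (c_id C (c_dom C f)) = f \<and> c_cmp C (c_id C (c_cod C f)) f = f) \<and>
    (\<forall>f g h. c_ar C f \<and> c_ar C g \<and> c_ar C h \<and> c_cod C f = c_dom C g \<and> c_cod C g = c_dom C h \<longrightarrow>
        c_cmp C h (c_cmp C g f) = c_cmp C (c_cmp C h g) f) \<and>
    \<comment> \<open>tensor bifunctor\<close>
    c_ob C (c_unit C) \<and>
    (\<forall>a b. c_ob C a \<and> c_ob C b \<longrightarrow> c_ob C (c_tob C a b)) \<and>
    (\<forall>f g. c_ar C f \<and> c_ar C g \<longrightarrow>
        c_hom C (c_tar C f g) (c_tob C (c_dom C f) (c_dom C g)) (c_tob C (c_cod C f) (c_cod C g))) \<and>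
    (\<forall>a b. c_ob C a \<and> c_ob C b \<longrightarrow> c_tar C (c_id C a) (c_id C b) = c_id C (c_tob C a b)) \<and>
    (\<forall>f g f' g'. c_ar C f \<and> c_ar C g \<and> c_ar C f' \<and> c_ar C g' \<and>
        c_cod C f = c_dom C g \<and> c_cod C f' = c_dom C g' \<longrightarrow>
        c_tar C (c_cmp C g f) (c_cmp C g' f') = c_cmp C (c_tar C g g') (c_tar C f f')) \<and>
    \<comment> \<open>strictness: associator and unitors are identities\<close>
    (\<forall>a b c. c_ob C a \<and> c_ob C b \<and> c_ob C c \<longrightarrow>
        c_tob C (c_tob C a b) c = c_tob C a (c_tob C b c)) \<and>
    (\<forall>a. c_ob C a \<longrightarrow> c_tob C (c_unit C) a = a \<and> c_tob C a (c_unit C) = a) \<and>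
    (\<forall>f g h. c_ar C f \<and> c_ar C g \<and> c_ar C h \<longrightarrow>
        c_tar C (c_tar C f g) h = c_tar C f (c_tar C g h)) \<and>
    (\<forall>f. c_ar C f \<longrightarrow> c_tar C (c_id C (c_unit C)) f = f \<and> c_tar C f (c_id C (c_unit C)) = f) \<and>
    \<comment> \<open>symmetry: natural, involutive, hexagon\<close>
    (\<forall>a b. c_ob C a \<and> c_ob C b \<longrightarrow> c_hom C (c_sym C a b) (c_tob C a b) (c_tob C b a)) \<and>
    (\<forall>f g. c_ar C f \<and> c_ar C g \<longrightarrow>
        c_cmp C (c_sym C (c_cod C f) (c_cod C g)) (c_tar C f g) =
        c_cmp C (c_tar C g f) (c_sym C (c_dom C f) (c_dom C g))) \<and>
    (\<forall>a b. c_ob C a \<and> c_ob C b \<longrightarrow> c_cmp C (c_sym C b a) (c_sym C a b) = c_id C (c_tob C a b)) \<and>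
    (\<forall>a b c. c_ob C a \<and> c_ob C b \<and> c_ob C c \<longrightarrow>
        c_sym C a (c_tob C b c) =
        c_cmp C (c_tar C (c_id C b) (c_sym C a c)) (c_tar C (c_sym C a b) (c_id C c)))"

definition hopf_monoid :: "('o, 'm) smcat \<Rightarrow> 'o \<Rightarrow> 'm \<Rightarrow> 'm \<Rightarrow> 'm \<Rightarrow> 'm \<Rightarrow> 'm \<Rightarrow> bool" where
  "hopf_monoid C H m u D e S \<longleftrightarrow>
    c_ob C H \<and>
    c_hom C m (c_tob C H H) H \<and> c_hom C u (c_unit C) H \<and>
    c_hom C D H (c_tob C H H) \<and> c_hom C e H (c_unit C) \<and> c_hom C S H H \<and>
    \<comment> \<open>monoid\<close>
    c_cmp C m (c_tar C m (c_id C H)) = c_cmp C m (c_tar C (c_id C H) m) \<and>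
    c_cmp C m (c_tar C u (c_id C H)) = c_id C H \<and>
    c_cmp C m (c_tar C (c_id C H) u) = c_id C H \<and>
    \<comment> \<open>comonoid\<close>
    c_cmp C (c_tar C D (c_id C H)) D = c_cmp C (c_tar C (c_id C H) D) D \<and>
    c_cmp C (c_tar C e (c_id C H)) D = c_id C H \<and>
    c_cmp C (c_tar C (c_id C H) e) D = c_id C H \<and>
    \<comment> \<open>bimonoid\<close>
    c_cmp C D m = c_cmp C (c_tar C m m)
       (c_cmp C (c_tar C (c_id C H) (c_tar C (c_sym C H H) (c_id C H))) (c_tar C D D)) \<and>
    c_cmp C e m = c_tar C e e \<and>
    c_cmp C D u = c_tar C u u \<and>
    c_cmp C e u = c_id C (c_unit C) \<and>
    \<comment> \<open>antipode\<close>
    c_cmp C m (c_cmp C (c_tar C S (c_id C H)) D) = c_cmp C u e \<and>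
    c_cmp C m (c_cmp C (c_tar C (c_id C H) S) D) = c_cmp C u e"

definition pivotal_hopf :: "('o, 'm) smcat \<Rightarrow> 'o \<Rightarrow> 'm \<Rightarrow> 'm \<Rightarrow> 'm \<Rightarrow> 'm \<Rightarrow> 'm \<Rightarrow> 'm \<Rightarrow> bool" where
  "pivotal_hopf C H m u D e S p \<longleftrightarrow>
    hopf_monoid C H m u D e S \<and>
    c_hom C p (c_unit C) H \<and>
    c_cmp C D p = c_tar C p p \<and>
    c_cmp C e p = c_id C (c_unit C) \<and>
    c_cmp C m (c_cmp C (c_tar C m (c_id C H))
       (c_cmp C (c_tar C (c_id C H) (c_tar C (c_cmp C S S) S))
                (c_tar C p (c_tar C (c_id C H) p)))) = c_id C H"

definition pivT :: "('o, 'm) smcat \<Rightarrow> 'm \<Rightarrow> 'm \<Rightarrow> 'm \<Rightarrow> 'm" where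
  "pivT C m S p = c_cmp C m (c_tar C p S)"

primrec tpow :: "('o, 'm) smcat \<Rightarrow> 'o \<Rightarrow> nat \<Rightarrow> 'o" where
  "tpow C H 0 = c_unit C"
| "tpow C H (Suc n) = c_tob C H (tpow C H n)"

text \<open>The edge set E is given as a duplicate-free list es (fixing the order of
the tensor factors of H^{(x) E}); edge a sits in position epos es a.\<close>
definition epos :: "'e list \<Rightarrow> 'e \<Rightarrow> nat" where
  "epos es a = length (takeWhile (\<lambda>x. x \<noteq> a) es)"

definition tpowE :: "('o, 'm) smcat \<Rightarrow> 'o \<Rightarrow> 'e list \<Rightarrow> 'o" where
  "tpowE C H es = tpow C H (length es)"

definition befE :: "('o, 'm) smcat \<Rightarrow> 'o \<Rightarrow> 'e list \<Rightarrow> 'e \<Rightarrow> 'o" where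
  "befE C H es a = tpow C H (epos es a)"

definition aftE :: "('o, 'm) smcat \<Rightarrow> 'o \<Rightarrow> 'e list \<Rightarrow> 'e \<Rightarrow> 'o" where
  "aftE C H es a = tpow C H (length es - epos es a - 1)"

text \<open>Act on the copy of edge a with f : H (x) H -> H:
 h (x) (... x ...) |-> (... f(h (x) x) ...).\<close>
definition edge_act :: "('o, 'm) smcat \<Rightarrow> 'o \<Rightarrow> 'e list \<Rightarrow> 'e \<Rightarrow> 'm \<Rightarrow> 'm" where
  "edge_act C H es a f =
    (let X = befE C H es a; Y = aftE C H es a in
     c_cmp C (c_tar C (c_id C X) (c_tar C f (c_id C Y)))
             (c_tar C (c_sym C H X) (c_id C (c_tob C H Y))))"

text \<open>Coact from the copy of edge a with g : H -> H (x) H: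
 (... x ...) |-> g(x)_1 (x) (... g(x)_2 ...).\<close>
definition edge_coact :: "('o, 'm) smcat \<Rightarrow> 'o \<Rightarrow> 'e list \<Rightarrow> 'e \<Rightarrow> 'm \<Rightarrow> 'm" where
  "edge_coact C H es a g =
    (let X = befE C H es a; Y = aftE C H es a in
     c_cmp C (c_tar C (c_sym C X H) (c_id C (c_tob C H Y)))
             (c_tar C (c_id C X) (c_tar C g (c_id C Y))))"

definition act_plus :: "('o, 'm) smcat \<Rightarrow> 'o \<Rightarrow> 'm \<Rightarrow> 'e list \<Rightarrow> 'e \<Rightarrow> 'm" where
  "act_plus C H m es a = edge_act C H es a m"

definition act_minus :: "('o, 'm) smcat \<Rightarrow> 'o \<Rightarrow> 'm \<Rightarrow> 'm \<Rightarrow> 'm \<Rightarrow> 'e list \<Rightarrow> 'e \<Rightarrow> 'm" where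
  "act_minus C H m S p es a =
     edge_act C H es a (c_cmp C (pivT C m S p) (c_cmp C m (c_tar C (c_id C H) (pivT C m S p))))"

definition coact_plus :: "('o, 'm) smcat \<Rightarrow> 'o \<Rightarrow> 'm \<Rightarrow> 'e list \<Rightarrow> 'e \<Rightarrow> 'm" where
  "coact_plus C H D es a = edge_coact C H es a D"

definition coact_minus :: "('o, 'm) smcat \<Rightarrow> 'o \<Rightarrow> 'm \<Rightarrow> 'm \<Rightarrow> 'm \<Rightarrow> 'm \<Rightarrow> 'e list \<Rightarrow> 'e \<Rightarrow> 'm" where
  "coact_minus C H m D S p es a =
     edge_coact C H es a (c_cmp C (c_tar C (c_id C H) (pivT C m S p)) (c_cmp C D (pivT C m S p)))"

definition ll_hopf_module :: "('o, 'm) smcat \<Rightarrow> 'o \<Rightarrow> 'm \<Rightarrow> 'm \<Rightarrow> 'o \<Rightarrow> 'm \<Rightarrow> 'm \<Rightarrow> bool" where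
  "ll_hopf_module C H m D M act coact \<longleftrightarrow>
     c_cmp C coact act =
     c_cmp C (c_tar C m act)
       (c_cmp C (c_tar C (c_id C H) (c_tar C (c_sym C H H) (c_id C M)))
                (c_tar C D coact))"

end

theory Submission
  imports Defs
begin


locale smc =
  fixes C :: "('o, 'm) smcat"
  assumes smc: "strict_smc C"
begin

abbreviation ob where "ob \<equiv> c_ob C"
abbreviation ar where "ar \<equiv> c_ar C"
abbreviation dom where "dom \<equiv> c_dom C"
abbreviation cod where "cod \<equiv> c_cod C"
abbreviation idm where "idm \<equiv> c_id C"
abbreviation cmp (infixr "\<odot>" 55) where "cmp \<equiv> c_cmp C"
abbreviation tar (infixr "\<otimes>" 60) where "tar \<equiv> c_tar C"
abbreviation tob (infixr "\<boxtimes>" 65) where "tob \<equiv> c_tob C"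
abbreviation one where "one \<equiv> c_unit C"
abbreviation sym where "sym \<equiv> c_sym C"

lemma P: "(\<forall>f. c_ar C f \<longrightarrow> c_ob C (c_dom C f) \<and> c_ob C (c_cod C f))"
 "(\<forall>a. c_ob C a \<longrightarrow> c_hom C (c_id C a) a a)"
 "(\<forall>f g. c_ar C f \<and> c_ar C g \<and> c_cod C f = c_dom C g \<longrightarrow>
        c_hom C (c_cmp C g f) (c_dom C f) (c_cod C g))"
 "(\<forall>f. c_ar C f \<longrightarrow> c_cmp C f (c_id C (c_dom C f)) = f \<and> c_cmp C (c_id C (c_cod C f)) f = f)"
 "(\<forall>f g h. c_ar C f \<and> c_ar C g \<and> c_ar C h \<and> c_cod C f = c_dom C g \<and> c_cod C g = c_dom C h \<longrightarrow>
        c_cmp C h (c_cmp C g f) = c_cmp C (c_cmp C h g) f)"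
 "c_ob C (c_unit C)"
 "(\<forall>a b. c_ob C a \<and> c_ob C b \<longrightarrow> c_ob C (c_tob C a b))"
 "(\<forall>f g. c_ar C f \<and> c_ar C g \<longrightarrow>
        c_hom C (c_tar C f g) (c_tob C (c_dom C f) (c_dom C g)) (c_tob C (c_cod C f) (c_cod C g)))"
 "(\<forall>a b. c_ob C a \<and> c_ob C b \<longrightarrow> c_tar C (c_id C a) (c_id C b) = c_id C (c_tob C a b))"
 "(\<forall>f g f' g'. c_ar C f \<and> c_ar C g \<and> c_ar C f' \<and> c_ar C g' \<and>
        c_cod C f = c_dom C g \<and> c_cod C f' = c_dom C g' \<longrightarrow>
        c_tar C (c_cmp C g f) (c_cmp C g' f') = c_cmp C (c_tar C g g') (c_tar C f f'))"
 "(\<forall>a b c. c_ob C a \<and> c_ob C b \<and> c_ob C c \<longrightarrow>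
        c_tob C (c_tob C a b) c = c_tob C a (c_tob C b c))"
 "(\<forall>a. c_ob C a \<longrightarrow> c_tob C (c_unit C) a = a \<and> c_tob C a (c_unit C) = a)"
 "(\<forall>f g h. c_ar C f \<and> c_ar C g \<and> c_ar C h \<longrightarrow>
        c_tar C (c_tar C f g) h = c_tar C f (c_tar C g h))"
 "(\<forall>f. c_ar C f \<longrightarrow> c_tar C (c_id C (c_unit C)) f = f \<and> c_tar C f (c_id C (c_unit C)) = f)"
 "(\<forall>a b. c_ob C a \<and> c_ob C b \<longrightarrow> c_hom C (c_sym C a b) (c_tob C a b) (c_tob C b a))"
 "(\<forall>f g. c_ar C f \<and> c_ar C g \<longrightarrow>
        c_cmp C (c_sym C (c_cod C f) (c_cod C g)) (c_tar C f g) =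
        c_cmp C (c_tar C g f) (c_sym C (c_dom C f) (c_dom C g)))"
 "(\<forall>a b. c_ob C a \<and> c_ob C b \<longrightarrow> c_cmp C (c_sym C b a) (c_sym C a b) = c_id C (c_tob C a b))"
 "(\<forall>a b c. c_ob C a \<and> c_ob C b \<and> c_ob C c \<longrightarrow>
        c_sym C a (c_tob C b c) =
        c_cmp C (c_tar C (c_id C b) (c_sym C a c)) (c_tar C (c_sym C a b) (c_id C c)))"
  using smc unfolding strict_smc_def by simp_all

lemma ob_dom[simp]: "ar f \<Longrightarrow> ob (dom f)" and ob_cod[simp]: "ar f \<Longrightarrow> ob (cod f)"
  using P unfolding c_hom_def by simp_all

lemma ar_id[simp]: "ob a \<Longrightarrow> ar (idm a)" and dom_id[simp]: "ob a \<Longrightarrow> dom (idm a) = a"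
  and cod_id[simp]: "ob a \<Longrightarrow> cod (idm a) = a"
  using P unfolding c_hom_def by simp_all

lemma ar_cmp[simp]: "ar f \<Longrightarrow> ar g \<Longrightarrow> cod f = dom g \<Longrightarrow> ar (g \<odot> f)"
  and dom_cmp[simp]: "ar f \<Longrightarrow> ar g \<Longrightarrow> cod f = dom g \<Longrightarrow> dom (g \<odot> f) = dom f"
  and cod_cmp[simp]: "ar f \<Longrightarrow> ar g \<Longrightarrow> cod f = dom g \<Longrightarrow> cod (g \<odot> f) = cod g"
  using P unfolding c_hom_def by simp_all

lemma ob_one[simp]: "ob one" and ob_tob[simp]: "ob a \<Longrightarrow> ob b \<Longrightarrow> ob (a \<boxtimes> b)"
  using P unfolding c_hom_def by simp_all

lemma ar_tar[simp]: "ar f \<Longrightarrow> ar g \<Longrightarrow> ar (f \<otimes> g)"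
  and dom_tar[simp]: "ar f \<Longrightarrow> ar g \<Longrightarrow> dom (f \<otimes> g) = dom f \<boxtimes> dom g"
  and cod_tar[simp]: "ar f \<Longrightarrow> ar g \<Longrightarrow> cod (f \<otimes> g) = cod f \<boxtimes> cod g"
  using P unfolding c_hom_def by simp_all

lemma tob_assoc[simp]: "ob a \<Longrightarrow> ob b \<Longrightarrow> ob c \<Longrightarrow> (a \<boxtimes> b) \<boxtimes> c = a \<boxtimes> (b \<boxtimes> c)"
  and tob_one_l[simp]: "ob a \<Longrightarrow> one \<boxtimes> a = a" and tob_one_r[simp]: "ob a \<Longrightarrow> a \<boxtimes> one = a"
  using P unfolding c_hom_def by simp_all

lemma ar_sym[simp]: "ob a \<Longrightarrow> ob b \<Longrightarrow> ar (sym a b)"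
  and dom_sym[simp]: "ob a \<Longrightarrow> ob b \<Longrightarrow> dom (sym a b) = a \<boxtimes> b"
  and cod_sym[simp]: "ob a \<Longrightarrow> ob b \<Longrightarrow> cod (sym a b) = b \<boxtimes> a"
  using P unfolding c_hom_def by simp_all

lemma id_r[simp]: "ar f \<Longrightarrow> a = dom f \<Longrightarrow> f \<odot> idm a = f"
  and id_l[simp]: "ar f \<Longrightarrow> a = cod f \<Longrightarrow> idm a \<odot> f = f"
  using P unfolding c_hom_def by simp_all

lemma cmp_assoc[simp]: "ar f \<Longrightarrow> ar g \<Longrightarrow> ar h \<Longrightarrow> cod f = dom g \<Longrightarrow> cod g = dom h \<Longrightarrow>
   (h \<odot> g) \<odot> f = h \<odot> (g \<odot> f)"
  using P unfolding c_hom_def by simp_all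

lemma tar_id_id: "ob a \<Longrightarrow> ob b \<Longrightarrow> idm a \<otimes> idm b = idm (a \<boxtimes> b)"
  using P unfolding c_hom_def by simp_all

lemma interchange: "ar f \<Longrightarrow> ar g \<Longrightarrow> ar f' \<Longrightarrow> ar g' \<Longrightarrow> cod f = dom g \<Longrightarrow> cod f' = dom g' \<Longrightarrow>
   (g \<otimes> g') \<odot> (f \<otimes> f') = (g \<odot> f) \<otimes> (g' \<odot> f')"
  using P unfolding c_hom_def by simp_all

lemma tar_assoc[simp]: "ar f \<Longrightarrow> ar g \<Longrightarrow> ar h \<Longrightarrow> (f \<otimes> g) \<otimes> h = f \<otimes> (g \<otimes> h)"
  using P unfolding c_hom_def by simp_all

lemma tar_one_l[simp]: "ar f \<Longrightarrow> idm one \<otimes> f = f" and tar_one_r[simp]: "ar f \<Longrightarrow> f \<otimes> idm one = f"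
  using P unfolding c_hom_def by simp_all

lemma sym_nat: "ar f \<Longrightarrow> ar g \<Longrightarrow>
   sym (cod f) (cod g) \<odot> (f \<otimes> g) = (g \<otimes> f) \<odot> sym (dom f) (dom g)"
  using P unfolding c_hom_def by simp_all

lemma sym_inv[simp]: "ob a \<Longrightarrow> ob b \<Longrightarrow> sym b a \<odot> sym a b = idm (a \<boxtimes> b)"
  using P unfolding c_hom_def by simp_all

lemma hexagon: "ob a \<Longrightarrow> ob b \<Longrightarrow> ob c \<Longrightarrow>
   sym a (b \<boxtimes> c) = (idm b \<otimes> sym a c) \<odot> (sym a b \<otimes> idm c)"
  using P unfolding c_hom_def by simp_all


lemma id_split[simp]: "ob a \<Longrightarrow> ob b \<Longrightarrow> idm (a \<boxtimes> b) = idm a \<otimes> idm b"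
  by (simp add: tar_id_id)

lemma ichg[simp]: "ar f \<Longrightarrow> ar g \<Longrightarrow> ar f' \<Longrightarrow> ar g' \<Longrightarrow> cod f = dom g \<Longrightarrow> cod f' = dom g' \<Longrightarrow>
   (g \<otimes> g') \<odot> (f \<otimes> f') = (g \<odot> f) \<otimes> (g' \<odot> f')"
  by (rule interchange)

lemma ichg2[simp]: "ar f \<Longrightarrow> ar g \<Longrightarrow> ar f' \<Longrightarrow> ar g' \<Longrightarrow> cod f = dom g \<Longrightarrow> cod f' = dom g' \<Longrightarrow>
   ar k \<Longrightarrow> cod k = dom f \<boxtimes> dom f' \<Longrightarrow>
   (g \<otimes> g') \<odot> ((f \<otimes> f') \<odot> k) = ((g \<odot> f) \<otimes> (g' \<odot> f')) \<odot> k"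
  by (simp flip: cmp_assoc add: interchange)

lemma ichgA[simp]: "ar f \<Longrightarrow> ar f' \<Longrightarrow> ar f'' \<Longrightarrow> ar g \<Longrightarrow> ar g' \<Longrightarrow>
   cod f \<boxtimes> cod f' = dom g \<Longrightarrow> cod f'' = dom g' \<Longrightarrow>
   (g \<otimes> g') \<odot> (f \<otimes> f' \<otimes> f'') = (g \<odot> (f \<otimes> f')) \<otimes> (g' \<odot> f'')"
  by (simp flip: tar_assoc add: interchange)

lemma ichgB[simp]: "ar f \<Longrightarrow> ar f' \<Longrightarrow> ar g'' \<Longrightarrow> ar g \<Longrightarrow> ar g' \<Longrightarrow>
   cod f = dom g \<boxtimes> dom g' \<Longrightarrow> cod f' = dom g'' \<Longrightarrow>
   (g \<otimes> g' \<otimes> g'') \<odot> (f \<otimes> f') = ((g \<otimes> g') \<odot> f) \<otimes> (g'' \<odot> f')"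
  by (simp flip: tar_assoc add: interchange)

lemma ichgA2[simp]: "ar f \<Longrightarrow> ar f' \<Longrightarrow> ar f'' \<Longrightarrow> ar g \<Longrightarrow> ar g' \<Longrightarrow>
   cod f \<boxtimes> cod f' = dom g \<Longrightarrow> cod f'' = dom g' \<Longrightarrow> ar k \<Longrightarrow> cod k = dom f \<boxtimes> dom f' \<boxtimes> dom f'' \<Longrightarrow>
   (g \<otimes> g') \<odot> ((f \<otimes> f' \<otimes> f'') \<odot> k) = ((g \<odot> (f \<otimes> f')) \<otimes> (g' \<odot> f'')) \<odot> k"
  by (simp flip: cmp_assoc tar_assoc add: interchange)

lemma ichgB2[simp]: "ar f \<Longrightarrow> ar f' \<Longrightarrow> ar g'' \<Longrightarrow> ar g \<Longrightarrow> ar g' \<Longrightarrow>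
   cod f = dom g \<boxtimes> dom g' \<Longrightarrow> cod f' = dom g'' \<Longrightarrow> ar k \<Longrightarrow> cod k = dom f \<boxtimes> dom f' \<Longrightarrow>
   (g \<otimes> g' \<otimes> g'') \<odot> ((f \<otimes> f') \<odot> k) = (((g \<otimes> g') \<odot> f) \<otimes> (g'' \<odot> f')) \<odot> k"
  by (simp flip: cmp_assoc tar_assoc add: interchange)

lemma idr2[simp]: "ar f \<Longrightarrow> ar k \<Longrightarrow> ob a \<Longrightarrow> k = idm (cod k) \<Longrightarrow> dom f = a \<boxtimes> cod k \<Longrightarrow> f \<odot> (idm a \<otimes> k) = f"
  by (metis ar_id cod_id dom_id id_r id_split ob_cod)

lemma idl2[simp]: "ar f \<Longrightarrow> ar k \<Longrightarrow> ob a \<Longrightarrow> k = idm (cod k) \<Longrightarrow> cod f = a \<boxtimes> cod k \<Longrightarrow> (idm a \<otimes> k) \<odot> f = f"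
  by (metis ar_id cod_id dom_id id_l id_split ob_cod)

lemma split_l: "ar f \<Longrightarrow> ar g \<Longrightarrow> ar k \<Longrightarrow> cod f = dom g \<Longrightarrow>
   (g \<odot> f) \<otimes> k = (g \<otimes> k) \<odot> (f \<otimes> idm (dom k))"
  by (metis interchange id_r id_l ar_id ob_dom ob_cod cod_id dom_id)

lemma split_r: "ar f \<Longrightarrow> ar g \<Longrightarrow> ar k \<Longrightarrow> cod f = dom g \<Longrightarrow>
   k \<otimes> (g \<odot> f) = (k \<otimes> g) \<odot> (idm (dom k) \<otimes> f)"
  by (metis interchange id_r id_l ar_id ob_dom ob_cod cod_id dom_id)

lemma split_l': "ar f \<Longrightarrow> ar g \<Longrightarrow> ar k \<Longrightarrow> cod f = dom g \<Longrightarrow>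
   (g \<odot> f) \<otimes> k = (g \<otimes> idm (cod k)) \<odot> (f \<otimes> k)"
  by (metis interchange id_r id_l ar_id ob_dom ob_cod cod_id dom_id)

lemma split_r': "ar f \<Longrightarrow> ar g \<Longrightarrow> ar k \<Longrightarrow> cod f = dom g \<Longrightarrow>
   k \<otimes> (g \<odot> f) = (idm (cod k) \<otimes> g) \<odot> (k \<otimes> f)"
  by (metis interchange id_r id_l ar_id ob_dom ob_cod cod_id dom_id)

lemma split_r2: "ar f \<Longrightarrow> ar g \<Longrightarrow> ar k \<Longrightarrow> ar k' \<Longrightarrow> cod f = dom g \<Longrightarrow>
   k \<otimes> k' \<otimes> (g \<odot> f) = (k \<otimes> k' \<otimes> g) \<odot> (idm (dom k) \<otimes> idm (dom k') \<otimes> f)"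
proof -
  assume a: "ar f" "ar g" "ar k" "ar k'" "cod f = dom g"
  have "k \<otimes> k' \<otimes> (g \<odot> f) = (k \<otimes> k') \<otimes> (g \<odot> f)" using a by simp
  also have "\<dots> = ((k \<otimes> k') \<otimes> g) \<odot> (idm (dom (k \<otimes> k')) \<otimes> f)"
    using a by (intro split_r) simp_all
  also have "\<dots> = (k \<otimes> k' \<otimes> g) \<odot> (idm (dom k) \<otimes> idm (dom k') \<otimes> f)" using a by simp
  finally show ?thesis .
qed

definition blk where "blk x = x"
lemma blk_ty[simp]: "ar (blk x) = ar x" "dom (blk x) = dom x" "cod (blk x) = cod x"
  unfolding blk_def by simp_all

lemma trail: "A = B \<odot> B' \<Longrightarrow> ar B \<Longrightarrow> ar B' \<Longrightarrow> ar k \<Longrightarrow> cod B' = dom B \<Longrightarrow> cod k = dom B' \<Longrightarrow>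
  A \<odot> k = B \<odot> (B' \<odot> k)"
  by simp

lemmas ichgs = ichg ichg2 ichgA ichgA2 ichgB ichgB2
lemmas splits = split_l split_r

lemma scal_r: "ar F \<Longrightarrow> ar Z \<Longrightarrow> cod Z = one \<Longrightarrow> F \<otimes> Z = F \<odot> (idm (dom F) \<otimes> Z)"
proof -
  assume a: "ar F" "ar Z" "cod Z = one"
  have "F \<odot> (idm (dom F) \<otimes> Z) = (F \<otimes> idm one) \<odot> (idm (dom F) \<otimes> Z)" using a by simp
  also have "\<dots> = F \<otimes> Z" using a by (subst interchange) simp_all
  finally show ?thesis by simp
qed

lemma scal_l: "ar F \<Longrightarrow> ar Z \<Longrightarrow> cod Z = one \<Longrightarrow> Z \<otimes> F = F \<odot> (Z \<otimes> idm (dom F))"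
proof -
  assume a: "ar F" "ar Z" "cod Z = one"
  have "F \<odot> (Z \<otimes> idm (dom F)) = (idm one \<otimes> F) \<odot> (Z \<otimes> idm (dom F))" using a by simp
  also have "\<dots> = Z \<otimes> F" using a by (subst interchange) simp_all
  finally show ?thesis by simp
qed

lemma pt_r: "ar A \<Longrightarrow> ar B \<Longrightarrow> dom B = one \<Longrightarrow> (idm (cod A) \<otimes> B) \<odot> A = A \<otimes> B"
proof -
  assume a: "ar A" "ar B" "dom B = one"
  have "(idm (cod A) \<otimes> B) \<odot> A = (idm (cod A) \<otimes> B) \<odot> (A \<otimes> idm one)" using a by simp
  also have "\<dots> = A \<otimes> B" using a by (subst interchange) simp_all
  finally show ?thesis .
qed

lemma pt_l: "ar A \<Longrightarrow> ar B \<Longrightarrow> dom B = one \<Longrightarrow> (B \<otimes> idm (cod A)) \<odot> A = B \<otimes> A"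
proof -
  assume a: "ar A" "ar B" "dom B = one"
  have "(B \<otimes> idm (cod A)) \<odot> A = (B \<otimes> idm (cod A)) \<odot> (idm one \<otimes> A)" using a by simp
  also have "\<dots> = B \<otimes> A" using a by (subst interchange) simp_all
  finally show ?thesis .
qed

lemma scal_pull:
  "ar g \<Longrightarrow> ar A \<Longrightarrow> ar Z \<Longrightarrow> cod A = dom g \<Longrightarrow> cod Z = one \<Longrightarrow> g \<odot> (A \<otimes> Z) = (g \<odot> A) \<otimes> Z"
  "ar g \<Longrightarrow> ar A \<Longrightarrow> ar Z \<Longrightarrow> cod A = dom g \<Longrightarrow> cod Z = one \<Longrightarrow> g \<odot> (Z \<otimes> A) = Z \<otimes> (g \<odot> A)"
proof -
  assume a: "ar g" "ar A" "ar Z" "cod A = dom g" "cod Z = one"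
  have "g \<odot> (A \<otimes> Z) = (g \<otimes> idm one) \<odot> (A \<otimes> Z)" using a by simp
  also have "\<dots> = (g \<odot> A) \<otimes> Z" using a by (subst interchange) simp_all
  finally show "g \<odot> (A \<otimes> Z) = (g \<odot> A) \<otimes> Z" .
  have "g \<odot> (Z \<otimes> A) = (idm one \<otimes> g) \<odot> (Z \<otimes> A)" using a by simp
  also have "\<dots> = Z \<otimes> (g \<odot> A)" using a by (subst interchange) simp_all
  finally show "g \<odot> (Z \<otimes> A) = Z \<otimes> (g \<odot> A)" .
qed

lemma scal_pull_k:
  "ar g \<Longrightarrow> ar A \<Longrightarrow> ar Z \<Longrightarrow> cod A = dom g \<Longrightarrow> cod Z = one \<Longrightarrow> ar k \<Longrightarrow> cod k = dom A \<boxtimes> dom Z \<Longrightarrow>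
    g \<odot> (A \<otimes> Z) \<odot> k = ((g \<odot> A) \<otimes> Z) \<odot> k"
  "ar g \<Longrightarrow> ar A \<Longrightarrow> ar Z \<Longrightarrow> cod A = dom g \<Longrightarrow> cod Z = one \<Longrightarrow> ar k \<Longrightarrow> cod k = dom Z \<boxtimes> dom A \<Longrightarrow>
    g \<odot> (Z \<otimes> A) \<odot> k = (Z \<otimes> (g \<odot> A)) \<odot> k"
  by (simp_all flip: cmp_assoc add: scal_pull)

lemma ptc_l: "ar Z \<Longrightarrow> ar B \<Longrightarrow> ar A \<Longrightarrow> dom Z = one \<Longrightarrow> cod A = dom B \<Longrightarrow> (Z \<otimes> B) \<odot> A = Z \<otimes> (B \<odot> A)"
proof -
  assume a: "ar Z" "ar B" "ar A" "dom Z = one" "cod A = dom B"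
  have "(Z \<otimes> B) \<odot> A = (Z \<otimes> B) \<odot> (idm one \<otimes> A)" using a by simp
  also have "\<dots> = Z \<otimes> (B \<odot> A)" using a by (subst interchange) simp_all
  finally show ?thesis .
qed

lemma ptc_r: "ar Z \<Longrightarrow> ar B \<Longrightarrow> ar A \<Longrightarrow> dom Z = one \<Longrightarrow> cod A = dom B \<Longrightarrow> (B \<otimes> Z) \<odot> A = (B \<odot> A) \<otimes> Z"
proof -
  assume a: "ar Z" "ar B" "ar A" "dom Z = one" "cod A = dom B"
  have "(B \<otimes> Z) \<odot> A = (B \<otimes> Z) \<odot> (A \<otimes> idm one)" using a by simp
  also have "\<dots> = (B \<odot> A) \<otimes> Z" using a by (subst interchange) simp_all
  finally show ?thesis .
qed

lemma sym_nat_k: "ar f \<Longrightarrow> ar g \<Longrightarrow> ar k \<Longrightarrow> cod k = dom f \<boxtimes> dom g \<Longrightarrow>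
   sym (cod f) (cod g) \<odot> (f \<otimes> g) \<odot> k = (g \<otimes> f) \<odot> sym (dom f) (dom g) \<odot> k"
  using sym_nat[of f g] by (simp flip: cmp_assoc)

lemma split_r_k: "ar f \<Longrightarrow> ar g \<Longrightarrow> ar k \<Longrightarrow> cod f = dom g \<Longrightarrow> ar j \<Longrightarrow> cod j = dom k \<boxtimes> dom f \<Longrightarrow>
   (k \<otimes> (g \<odot> f)) \<odot> j = (k \<otimes> g) \<odot> (idm (dom k) \<otimes> f) \<odot> j"
  by (subst split_r) simp_all

lemma split_l_k: "ar f \<Longrightarrow> ar g \<Longrightarrow> ar k \<Longrightarrow> cod f = dom g \<Longrightarrow> ar j \<Longrightarrow> cod j = dom f \<boxtimes> dom k \<Longrightarrow>
   ((g \<odot> f) \<otimes> k) \<odot> j = (g \<otimes> k) \<odot> (f \<otimes> idm (dom k)) \<odot> j"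
  by (subst split_l) simp_all

lemma sym_one: "ob a \<Longrightarrow> sym a one = idm a"
proof -
  assume a: "ob a"
  have 1: "sym a one = sym a one \<odot> sym a one"
    using hexagon[of a one one] a by simp
  have "idm a = sym one a \<odot> sym a one" using a by simp
  also have "\<dots> = sym one a \<odot> (sym a one \<odot> sym a one)" using 1 by simp
  also have "\<dots> = sym a one" using a by (simp flip: cmp_assoc)
  finally show ?thesis by simp
qed

lemma sym_one_l: "ob a \<Longrightarrow> sym one a = idm a"
proof -
  assume a: "ob a"
  have "sym a one \<odot> sym one a = idm a" using a sym_inv[of one a] by simp
  thus ?thesis using a by (simp add: sym_one)
qed

lemma hexagon2: "ob a \<Longrightarrow> ob b \<Longrightarrow> ob c \<Longrightarrow>
   sym (a \<boxtimes> b) c = (sym a c \<otimes> idm b) \<odot> (idm a \<otimes> sym b c)"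
proof -
  assume o: "ob a" "ob b" "ob c"
  let ?R = "(sym a c \<otimes> idm b) \<odot> (idm a \<otimes> sym b c)"
  have h: "sym c (a \<boxtimes> b) = (idm a \<otimes> sym c b) \<odot> (sym c a \<otimes> idm b)"
    using hexagon o by simp
  have "?R \<odot> sym c (a \<boxtimes> b) = idm (c \<boxtimes> a \<boxtimes> b)"
    unfolding h using o by simp
  hence "sym (a \<boxtimes> b) c = (?R \<odot> sym c (a \<boxtimes> b)) \<odot> sym (a \<boxtimes> b) c" using o by simp
  also have "\<dots> = ?R" using o by (simp del: id_split add: sym_inv)
  finally show ?thesis .
qed

end

definition opC :: "('o, 'm) smcat \<Rightarrow> ('o, 'm) smcat" where
  "opC C = C\<lparr>c_dom := c_cod C, c_cod := c_dom C, c_cmp := (\<lambda>g f. c_cmp C f g), c_sym := (\<lambda>a b. c_sym C b a)\<rparr>"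

lemma opC_simps[simp]: "c_ob (opC C) = c_ob C" "c_ar (opC C) = c_ar C" "c_dom (opC C) = c_cod C"
  "c_cod (opC C) = c_dom C" "c_id (opC C) = c_id C" "c_cmp (opC C) g f = c_cmp C f g"
  "c_tob (opC C) = c_tob C" "c_tar (opC C) = c_tar C" "c_unit (opC C) = c_unit C"
  "c_sym (opC C) a b = c_sym C b a"
  unfolding opC_def by simp_all

context smc begin
lemma op_smc: "strict_smc (opC C)"
  unfolding strict_smc_def c_hom_def opC_simps
  apply (intro conjI allI impI)
  apply (simp_all del: ichgs id_split add: tar_id_id interchange hexagon2)
  apply (metis sym_nat)
  done
end


locale hopf = smc C for C :: "('o, 'm) smcat" +
  fixes H :: 'o and m u D e S :: 'm
  assumes hm: "hopf_monoid C H m u D e S"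
begin

abbreviation \<iota> where "\<iota> \<equiv> idm H"
abbreviation \<sigma> where "\<sigma> \<equiv> sym H H"

lemma ob_H[simp]: "ob H" using hm unfolding hopf_monoid_def by simp
lemma ty_m[simp]: "ar m" "dom m = H \<boxtimes> H" "cod m = H" using hm unfolding hopf_monoid_def c_hom_def by auto
lemma ty_u[simp]: "ar u" "dom u = one" "cod u = H" using hm unfolding hopf_monoid_def c_hom_def by auto
lemma ty_D[simp]: "ar D" "dom D = H" "cod D = H \<boxtimes> H" using hm unfolding hopf_monoid_def c_hom_def by auto
lemma ty_e[simp]: "ar e" "dom e = H" "cod e = one" using hm unfolding hopf_monoid_def c_hom_def by auto
lemma ty_S[simp]: "ar S" "dom S = H" "cod S = H" using hm unfolding hopf_monoid_def c_hom_def by auto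

lemma m_assoc: "m \<odot> (m \<otimes> \<iota>) = m \<odot> (\<iota> \<otimes> m)" using hm unfolding hopf_monoid_def by simp
lemma m_unitl[simp]: "m \<odot> (u \<otimes> \<iota>) = \<iota>" using hm unfolding hopf_monoid_def by simp
lemma m_unitr[simp]: "m \<odot> (\<iota> \<otimes> u) = \<iota>" using hm unfolding hopf_monoid_def by simp
lemma D_coassoc: "(D \<otimes> \<iota>) \<odot> D = (\<iota> \<otimes> D) \<odot> D" using hm unfolding hopf_monoid_def by simp
lemma D_counitl[simp]: "(e \<otimes> \<iota>) \<odot> D = \<iota>" using hm unfolding hopf_monoid_def by simp
lemma D_counitr[simp]: "(\<iota> \<otimes> e) \<odot> D = \<iota>" using hm unfolding hopf_monoid_def by simp
lemma bimon: "D \<odot> m = (m \<otimes> m) \<odot> (\<iota> \<otimes> \<sigma> \<otimes> \<iota>) \<odot> (D \<otimes> D)" using hm unfolding hopf_monoid_def by simp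
lemma e_m: "e \<odot> m = e \<otimes> e" using hm unfolding hopf_monoid_def by simp
lemma D_u: "D \<odot> u = u \<otimes> u" using hm unfolding hopf_monoid_def by simp
lemma e_u[simp]: "e \<odot> u = idm one" using hm unfolding hopf_monoid_def by simp
lemma antipl: "m \<odot> (S \<otimes> \<iota>) \<odot> D = u \<odot> e" using hm unfolding hopf_monoid_def by simp
lemma antipr: "m \<odot> (\<iota> \<otimes> S) \<odot> D = u \<odot> e" using hm unfolding hopf_monoid_def by simp

definition D2 where "D2 = (\<iota> \<otimes> \<sigma> \<otimes> \<iota>) \<odot> (D \<otimes> D)"
lemma ty_D2[simp]: "ar D2" "dom D2 = H \<boxtimes> H" "cod D2 = H \<boxtimes> H \<boxtimes> H \<boxtimes> H"
  unfolding D2_def by simp_all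

lemma natH1: "sym H (H \<boxtimes> H) \<odot> (\<iota> \<otimes> D) = (D \<otimes> \<iota>) \<odot> \<sigma>"
  using sym_nat[of \<iota> D] by simp
lemma natH2: "sym (H \<boxtimes> H) H \<odot> (D \<otimes> \<iota>) = (\<iota> \<otimes> D) \<odot> \<sigma>"
  using sym_nat[of D \<iota>] by simp

definition D3 where "D3 = (D \<otimes> \<iota>) \<odot> D"
lemma ty_D3[simp]: "ar D3" "dom D3 = H" "cod D3 = H \<boxtimes> H \<boxtimes> H"
  unfolding D3_def by simp_all
lemma D3_fold[simp]: "(D \<otimes> \<iota>) \<odot> D = D3" "(\<iota> \<otimes> D) \<odot> D = D3"
  unfolding D3_def by (simp_all add: D_coassoc)
lemma D3_fold2[simp]: "ar k \<Longrightarrow> cod k = H \<Longrightarrow> (D \<otimes> \<iota>) \<odot> D \<odot> k = D3 \<odot> k" "ar k \<Longrightarrow> cod k = H \<Longrightarrow> (\<iota> \<otimes> D) \<odot> D \<odot> k = D3 \<odot> k"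
  by (simp_all flip: cmp_assoc)

lemma s1: "(D2 \<otimes> \<iota> \<otimes> \<iota>) \<odot> D2 = (\<iota>\<otimes>\<sigma>\<otimes>\<iota>\<otimes>\<iota>\<otimes>\<iota>)\<odot>(D\<otimes>D\<otimes>\<iota>\<otimes>\<iota>)\<odot>(\<iota>\<otimes>\<sigma>\<otimes>\<iota>)\<odot>(D\<otimes>D)"
  unfolding D2_def
  apply (subst split_l) apply simp_all
  done

lemma A: "(D2 \<otimes> \<iota> \<otimes> \<iota>) \<odot> D2 = (\<iota>\<otimes>\<sigma>\<otimes>\<iota>\<otimes>\<iota>\<otimes>\<iota>)\<odot>(\<iota>\<otimes>\<iota>\<otimes>sym H (H \<boxtimes> H)\<otimes>\<iota>)\<odot>blk (D3 \<otimes> D3)"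
proof -
  have "(D2 \<otimes> \<iota> \<otimes> \<iota>) \<odot> D2 = (\<iota>\<otimes>\<sigma>\<otimes>\<iota>\<otimes>\<iota>\<otimes>\<iota>)\<odot>(D\<otimes>(sym H (H \<boxtimes> H) \<odot> (\<iota>\<otimes>D))\<otimes>\<iota>)\<odot>(D\<otimes>D)"
    unfolding s1 by (simp add: natH1)
  also have "\<dots> = (\<iota>\<otimes>\<sigma>\<otimes>\<iota>\<otimes>\<iota>\<otimes>\<iota>)\<odot>(\<iota>\<otimes>\<iota>\<otimes>sym H (H \<boxtimes> H)\<otimes>\<iota>)\<odot>(D\<otimes>\<iota>\<otimes>D\<otimes>\<iota>)\<odot>blk(D\<otimes>D)"
    by simp (simp add: blk_def)
  also have "\<dots> = (\<iota>\<otimes>\<sigma>\<otimes>\<iota>\<otimes>\<iota>\<otimes>\<iota>)\<odot>(\<iota>\<otimes>\<iota>\<otimes>sym H (H \<boxtimes> H)\<otimes>\<iota>)\<odot>blk (D3 \<otimes> D3)"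
    by (simp add: blk_def)
  finally show ?thesis .
qed

lemma B: "(\<iota> \<otimes> \<iota> \<otimes> D2) \<odot> D2 = (\<iota>\<otimes>\<iota>\<otimes>\<iota>\<otimes>\<sigma>\<otimes>\<iota>)\<odot>(\<iota>\<otimes>sym (H \<boxtimes> H) H\<otimes>\<iota>\<otimes>\<iota>)\<odot>blk (D3 \<otimes> D3)"
proof -
  have "(\<iota> \<otimes> \<iota> \<otimes> D2) \<odot> D2 = (\<iota>\<otimes>\<iota>\<otimes>\<iota>\<otimes>\<sigma>\<otimes>\<iota>)\<odot>(\<iota>\<otimes>\<iota>\<otimes>D\<otimes>D)\<odot>(\<iota>\<otimes>\<sigma>\<otimes>\<iota>)\<odot>blk(D\<otimes>D)"
  proof -
    have "\<iota> \<otimes> \<iota> \<otimes> D2 = (\<iota>\<otimes>\<iota>\<otimes>\<iota>\<otimes>\<sigma>\<otimes>\<iota>)\<odot>(\<iota>\<otimes>\<iota>\<otimes>D\<otimes>D)"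
      unfolding D2_def by (subst split_r2) simp_all
    hence "(\<iota> \<otimes> \<iota> \<otimes> D2) \<odot> D2 = (\<iota>\<otimes>\<iota>\<otimes>\<iota>\<otimes>\<sigma>\<otimes>\<iota>)\<odot>((\<iota>\<otimes>\<iota>\<otimes>D\<otimes>D) \<odot> D2)"
      by (rule trail) simp_all
    thus ?thesis unfolding D2_def by (simp add: blk_def)
  qed
  also have "\<dots> = (\<iota>\<otimes>\<iota>\<otimes>\<iota>\<otimes>\<sigma>\<otimes>\<iota>)\<odot>(\<iota>\<otimes>(sym (H \<boxtimes> H) H \<odot> (D\<otimes>\<iota>))\<otimes>D)\<odot>blk(D\<otimes>D)"
    by (simp add: natH2)
  also have "\<dots> = (\<iota>\<otimes>\<iota>\<otimes>\<iota>\<otimes>\<sigma>\<otimes>\<iota>)\<odot>(\<iota>\<otimes>sym (H \<boxtimes> H) H\<otimes>\<iota>\<otimes>\<iota>)\<odot>(\<iota>\<otimes>D\<otimes>\<iota>\<otimes>D)\<odot>blk(D\<otimes>D)"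
    by simp
  also have "\<dots> = (\<iota>\<otimes>\<iota>\<otimes>\<iota>\<otimes>\<sigma>\<otimes>\<iota>)\<odot>(\<iota>\<otimes>sym (H \<boxtimes> H) H\<otimes>\<iota>\<otimes>\<iota>)\<odot>blk (D3 \<otimes> D3)"
    by (simp add: blk_def)
  finally show ?thesis .
qed

lemma D2_coassoc: "(D2 \<otimes> \<iota> \<otimes> \<iota>) \<odot> D2 = (\<iota> \<otimes> \<iota> \<otimes> D2) \<odot> D2"
proof -
  have 1: "\<iota>\<otimes>\<iota>\<otimes>sym H (H \<boxtimes> H)\<otimes>\<iota> = (\<iota>\<otimes>\<iota>\<otimes>\<iota>\<otimes>\<sigma>\<otimes>\<iota>) \<odot> (\<iota>\<otimes>\<iota>\<otimes>\<sigma>\<otimes>\<iota>\<otimes>\<iota>)"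
    by (simp add: hexagon splits del: ichgs)
  have 2: "\<iota>\<otimes>sym (H \<boxtimes> H) H\<otimes>\<iota>\<otimes>\<iota> = (\<iota>\<otimes>\<sigma>\<otimes>\<iota>\<otimes>\<iota>\<otimes>\<iota>) \<odot> (\<iota>\<otimes>\<iota>\<otimes>\<sigma>\<otimes>\<iota>\<otimes>\<iota>)"
    by (simp add: hexagon2 splits del: ichgs)
  have "(D2 \<otimes> \<iota> \<otimes> \<iota>) \<odot> D2 = (\<iota>\<otimes>\<sigma>\<otimes>\<iota>\<otimes>\<iota>\<otimes>\<iota>) \<odot> (\<iota>\<otimes>\<iota>\<otimes>\<iota>\<otimes>\<sigma>\<otimes>\<iota>) \<odot> blk ((\<iota>\<otimes>\<iota>\<otimes>\<sigma>\<otimes>\<iota>\<otimes>\<iota>) \<odot> blk (D3 \<otimes> D3))"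
    unfolding A 1 by (simp add: blk_def)
  also have "\<dots> = (\<iota>\<otimes>\<iota>\<otimes>\<iota>\<otimes>\<sigma>\<otimes>\<iota>) \<odot> (\<iota>\<otimes>\<sigma>\<otimes>\<iota>\<otimes>\<iota>\<otimes>\<iota>) \<odot> blk ((\<iota>\<otimes>\<iota>\<otimes>\<sigma>\<otimes>\<iota>\<otimes>\<iota>) \<odot> blk (D3 \<otimes> D3))"
    by simp
  also have "\<dots> = (\<iota> \<otimes> \<iota> \<otimes> D2) \<odot> D2"
    unfolding B 2 by (simp add: blk_def)
  finally show ?thesis .
qed

lemma bimon2: "D \<odot> m = (m \<otimes> m) \<odot> D2" unfolding D2_def using bimon by simp

lemma natE: "(\<iota> \<otimes> e) \<odot> \<sigma> = e \<otimes> \<iota>" "(e \<otimes> \<iota>) \<odot> \<sigma> = \<iota> \<otimes> e"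
  using sym_nat[of \<iota> e] sym_nat[of e \<iota>] by (simp_all add: sym_one sym_one_l)

lemma D2_counit: "(\<iota>\<otimes>\<iota>\<otimes>e\<otimes>e) \<odot> D2 = \<iota> \<otimes> \<iota>" "(e\<otimes>e\<otimes>\<iota>\<otimes>\<iota>) \<odot> D2 = \<iota> \<otimes> \<iota>"
  unfolding D2_def by (simp_all add: natE)

lemma m_unit_gen[simp]:
  "ar A \<Longrightarrow> ar Z \<Longrightarrow> cod A = H \<Longrightarrow> cod Z = one \<Longrightarrow> m \<odot> (A \<otimes> (u \<odot> Z)) = A \<otimes> Z"
  "ar A \<Longrightarrow> ar Z \<Longrightarrow> cod A = H \<Longrightarrow> cod Z = one \<Longrightarrow> m \<odot> ((u \<odot> Z) \<otimes> A) = Z \<otimes> A"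
  "ar A \<Longrightarrow> cod A = H \<Longrightarrow> m \<odot> (A \<otimes> u) = A"
  "ar A \<Longrightarrow> cod A = H \<Longrightarrow> m \<odot> (u \<otimes> A) = A"
proof -
  assume a: "ar A" "ar Z" "cod A = H" "cod Z = one"
  have "A \<otimes> Z = (m \<odot> (\<iota> \<otimes> u)) \<odot> (A \<otimes> Z)" using a by simp
  also have "\<dots> = m \<odot> ((\<iota> \<otimes> u) \<odot> (A \<otimes> Z))" using a by (rule_tac cmp_assoc) simp_all
  also have "\<dots> = m \<odot> (A \<otimes> (u \<odot> Z))" using a by simp
  finally show "m \<odot> (A \<otimes> (u \<odot> Z)) = A \<otimes> Z" by simp
  have "Z \<otimes> A = (m \<odot> (u \<otimes> \<iota>)) \<odot> (Z \<otimes> A)" using a by simp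
  also have "\<dots> = m \<odot> ((u \<otimes> \<iota>) \<odot> (Z \<otimes> A))" using a by (rule_tac cmp_assoc) simp_all
  also have "\<dots> = m \<odot> ((u \<odot> Z) \<otimes> A)" using a by simp
  finally show "m \<odot> ((u \<odot> Z) \<otimes> A) = Z \<otimes> A" by simp
next
  assume a: "ar A" "cod A = H"
  have "A = (m \<odot> (\<iota> \<otimes> u)) \<odot> A" using a by simp
  also have "\<dots> = m \<odot> ((\<iota> \<otimes> u) \<odot> A)" using a by (rule_tac cmp_assoc) simp_all
  also have "\<dots> = m \<odot> (A \<otimes> u)" using a using pt_r[of A u] by simp
  finally show "m \<odot> (A \<otimes> u) = A" by simp
  have "A = (m \<odot> (u \<otimes> \<iota>)) \<odot> A" using a by simp
  also have "\<dots> = m \<odot> ((u \<otimes> \<iota>) \<odot> A)" using a by (rule_tac cmp_assoc) simp_all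
  also have "\<dots> = m \<odot> (u \<otimes> A)" using a using pt_l[of A u] by simp
  finally show "m \<odot> (u \<otimes> A) = A" by simp
qed

lemma m_unit_gen_k[simp]:
  "ar A \<Longrightarrow> ar Z \<Longrightarrow> cod A = H \<Longrightarrow> cod Z = one \<Longrightarrow> ar k \<Longrightarrow> cod k = dom A \<boxtimes> dom Z \<Longrightarrow> m \<odot> (A \<otimes> (u \<odot> Z)) \<odot> k = (A \<otimes> Z) \<odot> k"
  "ar A \<Longrightarrow> ar Z \<Longrightarrow> cod A = H \<Longrightarrow> cod Z = one \<Longrightarrow> ar k \<Longrightarrow> cod k = dom Z \<boxtimes> dom A \<Longrightarrow> m \<odot> ((u \<odot> Z) \<otimes> A) \<odot> k = (Z \<otimes> A) \<odot> k"
  "ar A \<Longrightarrow> cod A = H \<Longrightarrow> ar k \<Longrightarrow> cod k = dom A \<Longrightarrow> m \<odot> (A \<otimes> u) \<odot> k = A \<odot> k"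
  "ar A \<Longrightarrow> cod A = H \<Longrightarrow> ar k \<Longrightarrow> cod k = dom A \<Longrightarrow> m \<odot> (u \<otimes> A) \<odot> k = A \<odot> k"
  by (simp_all flip: cmp_assoc)

definition conv where "conv F G = m \<odot> (F \<otimes> G) \<odot> D2"
definition E2 where "E2 = u \<odot> (e \<otimes> e)"
abbreviation "hh F \<equiv> ar F \<and> dom F = H \<boxtimes> H \<and> cod F = H"

lemma conv_ty[simp]: "hh F \<Longrightarrow> hh G \<Longrightarrow> ar (conv F G)" "hh F \<Longrightarrow> hh G \<Longrightarrow> dom (conv F G) = H \<boxtimes> H"
  "hh F \<Longrightarrow> hh G \<Longrightarrow> cod (conv F G) = H"
  unfolding conv_def by simp_all
lemma E2_ty[simp]: "ar E2" "dom E2 = H \<boxtimes> H" "cod E2 = H" unfolding E2_def by simp_all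

lemma m_assoc_k: "ar k \<Longrightarrow> cod k = H \<boxtimes> H \<boxtimes> H \<Longrightarrow> m \<odot> (m \<otimes> \<iota>) \<odot> k = m \<odot> (\<iota> \<otimes> m) \<odot> k"
  using m_assoc by (simp flip: cmp_assoc)

lemma conv_assoc: "hh F \<Longrightarrow> hh G \<Longrightarrow> hh K \<Longrightarrow> conv (conv F G) K = conv F (conv G K)"
proof -
  assume a: "hh F" "hh G" "hh K"
  have "conv (conv F G) K = m \<odot> (m \<otimes> \<iota>) \<odot> (F \<otimes> G \<otimes> K) \<odot> blk ((D2 \<otimes> \<iota> \<otimes> \<iota>) \<odot> D2)"
    unfolding conv_def using a by (simp add: blk_def)
  also have "\<dots> = m \<odot> (\<iota> \<otimes> m) \<odot> (F \<otimes> G \<otimes> K) \<odot> blk ((\<iota> \<otimes> \<iota> \<otimes> D2) \<odot> D2)"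
    using a by (subst m_assoc_k) (simp_all add: D2_coassoc)
  also have "\<dots> = conv F (conv G K)"
    unfolding conv_def using a by (simp add: blk_def)
  finally show ?thesis .
qed

lemma conv_unit: "hh F \<Longrightarrow> conv F E2 = F" "hh F \<Longrightarrow> conv E2 F = F"
proof -
  assume a: "hh F"
  have "conv F E2 = (F \<otimes> e \<otimes> e) \<odot> D2"
    unfolding conv_def E2_def using a by simp
  also have "\<dots> = F \<odot> blk ((\<iota>\<otimes>\<iota>\<otimes>e\<otimes>e) \<odot> D2)"
    using a by (subst scal_r) (simp_all add: blk_def)
  finally show "conv F E2 = F" using a by (simp add: D2_counit blk_def)
  have "conv E2 F = (e \<otimes> e \<otimes> F) \<odot> D2"
    unfolding conv_def E2_def using a by simp
  also have "\<dots> = ((e \<otimes> e) \<otimes> F) \<odot> D2" using a by simp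
  also have "\<dots> = F \<odot> blk ((e\<otimes>e\<otimes>\<iota>\<otimes>\<iota>) \<odot> D2)"
    using a by (subst scal_l) (simp_all add: blk_def)
  finally show "conv E2 F = F" using a by (simp add: D2_counit blk_def)
qed

lemma natE2[simp]: "ar A \<Longrightarrow> dom A = H \<Longrightarrow> cod A = H \<Longrightarrow> (e \<otimes> A) \<odot> \<sigma> = A \<otimes> e"
  "ar A \<Longrightarrow> dom A = H \<Longrightarrow> cod A = H \<Longrightarrow> (A \<otimes> e) \<odot> \<sigma> = e \<otimes> A"
  using sym_nat[of A e] sym_nat[of e A] by (simp_all add: sym_one sym_one_l)
lemma natE2_k[simp]: "ar A \<Longrightarrow> dom A = H \<Longrightarrow> cod A = H \<Longrightarrow> ar k \<Longrightarrow> cod k = H \<boxtimes> H \<Longrightarrow> (e \<otimes> A) \<odot> \<sigma> \<odot> k = (A \<otimes> e) \<odot> k"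
  "ar A \<Longrightarrow> dom A = H \<Longrightarrow> cod A = H \<Longrightarrow> ar k \<Longrightarrow> cod k = H \<boxtimes> H \<Longrightarrow> (A \<otimes> e) \<odot> \<sigma> \<odot> k = (e \<otimes> A) \<odot> k"
  by (simp_all flip: cmp_assoc add: natE2)

lemma antip_k[simp]: "ar k \<Longrightarrow> cod k = H \<Longrightarrow> m \<odot> (S \<otimes> \<iota>) \<odot> D \<odot> k = u \<odot> e \<odot> k"
  "ar k \<Longrightarrow> cod k = H \<Longrightarrow> m \<odot> (\<iota> \<otimes> S) \<odot> D \<odot> k = u \<odot> e \<odot> k"
  using antipl antipr by (simp_all flip: cmp_assoc)
lemmas antip[simp] = antipl antipr

definition R where "R = m \<odot> (S \<otimes> S) \<odot> \<sigma>"
lemma R_ty[simp]: "ar R" "dom R = H \<boxtimes> H" "cod R = H" unfolding R_def by simp_all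

lemma L4: "conv (S \<odot> m) m = E2"
proof -
  have "conv (S \<odot> m) m = m \<odot> (S \<otimes> \<iota>) \<odot> blk ((m \<otimes> m) \<odot> D2)"
    unfolding conv_def by (simp add: blk_def)
  also have "\<dots> = m \<odot> (S \<otimes> \<iota>) \<odot> D \<odot> m"
    by (simp add: blk_def bimon2)
  also have "\<dots> = E2" unfolding E2_def by (simp add: e_m)
  finally show ?thesis .
qed

lemma m4V: "ar V \<Longrightarrow> cod V = H \<boxtimes> H \<Longrightarrow> ar k \<Longrightarrow> cod k = H \<boxtimes> H \<boxtimes> dom V \<Longrightarrow>
  m \<odot> (m \<otimes> (m \<odot> V)) \<odot> k = m \<odot> (\<iota> \<otimes> m) \<odot> (\<iota> \<otimes> m \<otimes> \<iota>) \<odot> (\<iota> \<otimes> \<iota> \<otimes> V) \<odot> k"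
proof -
  assume a: "ar V" "cod V = H \<boxtimes> H" "ar k" "cod k = H \<boxtimes> H \<boxtimes> dom V"
  have "m \<odot> (m \<otimes> (m \<odot> V)) \<odot> k = m \<odot> (m \<otimes> \<iota>) \<odot> (\<iota> \<otimes> \<iota> \<otimes> m) \<odot> (\<iota> \<otimes> \<iota> \<otimes> V) \<odot> k"
    using a by simp
  also have "\<dots> = m \<odot> (\<iota> \<otimes> m) \<odot> (\<iota> \<otimes> \<iota> \<otimes> m) \<odot> (\<iota> \<otimes> \<iota> \<otimes> V) \<odot> k"
    using a by (subst m_assoc_k) simp_all
  also have "\<dots> = m \<odot> (\<iota> \<otimes> (m \<odot> (\<iota> \<otimes> m))) \<odot> (\<iota> \<otimes> \<iota> \<otimes> V) \<odot> k"
    using a by simp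
  also have "\<dots> = m \<odot> (\<iota> \<otimes> (m \<odot> (m \<otimes> \<iota>))) \<odot> (\<iota> \<otimes> \<iota> \<otimes> V) \<odot> k"
    using a by (simp add: m_assoc)
  also have "\<dots> = m \<odot> (\<iota> \<otimes> m) \<odot> (\<iota> \<otimes> m \<otimes> \<iota>) \<odot> (\<iota> \<otimes> \<iota> \<otimes> V) \<odot> k"
    using a by simp
  finally show ?thesis .
qed

lemma L5a: "(\<iota> \<otimes> \<iota> \<otimes> \<sigma>) \<odot> D2 = (\<iota> \<otimes> D \<otimes> \<iota>) \<odot> (\<iota> \<otimes> \<sigma>) \<odot> (D \<otimes> \<iota>)"
proof -
  have "(\<iota> \<otimes> \<iota> \<otimes> \<sigma>) \<odot> D2 = (\<iota> \<otimes> sym H (H \<boxtimes> H)) \<odot> (\<iota> \<otimes> \<iota> \<otimes> D) \<odot> blk (D \<otimes> \<iota>)"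
    unfolding D2_def by (simp add: blk_def hexagon)
  also have "\<dots> = (\<iota> \<otimes> D \<otimes> \<iota>) \<odot> (\<iota> \<otimes> \<sigma>) \<odot> (D \<otimes> \<iota>)"
    by (simp add: natH1, simp add: blk_def)
  finally show ?thesis .
qed

lemma L5: "conv m R = E2"
proof -
  have "conv m R = m \<odot> (\<iota> \<otimes> m) \<odot> (\<iota> \<otimes> m \<otimes> \<iota>) \<odot> (\<iota> \<otimes> \<iota> \<otimes> S \<otimes> S) \<odot> blk ((\<iota> \<otimes> \<iota> \<otimes> \<sigma>) \<odot> D2)"
    unfolding conv_def R_def by (subst m4V) (simp_all add: blk_def)
  also have "\<dots> = m \<odot> (\<iota> \<otimes> m) \<odot> (\<iota> \<otimes> m \<otimes> \<iota>) \<odot> (\<iota> \<otimes> \<iota> \<otimes> S \<otimes> S) \<odot> (\<iota> \<otimes> D \<otimes> \<iota>) \<odot> blk ((\<iota> \<otimes> \<sigma>) \<odot> (D \<otimes> \<iota>))"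
    unfolding L5a by (simp add: blk_def)
  also have "\<dots> = m \<odot> (((\<iota> \<otimes> S) \<odot> D) \<otimes> e)"
    by (simp add: blk_def)
  also have "\<dots> = E2"
    unfolding E2_def by (subst scal_pull) (simp_all add: scal_pull)
  finally show ?thesis .
qed

lemma anti_mult: "S \<odot> m = m \<odot> (S \<otimes> S) \<odot> \<sigma>"
proof -
  have "S \<odot> m = conv (S \<odot> m) E2" by (simp add: conv_unit)
  also have "\<dots> = conv (S \<odot> m) (conv m R)" by (simp add: L5)
  also have "\<dots> = conv (conv (S \<odot> m) m) R" by (simp add: conv_assoc)
  also have "\<dots> = R" by (simp add: L4 conv_unit)
  finally show ?thesis unfolding R_def .
qed

lemma op_hopf: "hopf_monoid (opC C) H D e m u S"
  unfolding hopf_monoid_def c_hom_def opC_simps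
  by (simp_all add: D_coassoc m_assoc bimon e_m D_u)

lemma anti_comult: "D \<odot> S = \<sigma> \<odot> (S \<otimes> S) \<odot> D"
proof -
  interpret op: hopf "opC C" H D e m u S
    by (unfold_locales) (simp_all add: op_smc op_hopf)
  from op.anti_mult show ?thesis by simp
qed

end


locale piv = hopf C H m u D e S for C :: "('o, 'm) smcat" and H m u D e S +
  fixes p :: 'm
  assumes pv: "pivotal_hopf C H m u D e S p"
begin

lemma ty_p[simp]: "ar p" "dom p = one" "cod p = H" using pv unfolding pivotal_hopf_def c_hom_def by auto
lemma D_p: "D \<odot> p = p \<otimes> p" using pv unfolding pivotal_hopf_def by simp
lemma e_p[simp]: "e \<odot> p = idm one" using pv unfolding pivotal_hopf_def by simp
lemma piv_raw: "m \<odot> (m \<otimes> \<iota>) \<odot> (\<iota> \<otimes> (S \<odot> S) \<otimes> S) \<odot> (p \<otimes> \<iota> \<otimes> p) = \<iota>"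
  using pv unfolding pivotal_hopf_def by simp

definition T where "T = m \<odot> (p \<otimes> S)"
lemma ty_T[simp]: "ar T" "dom T = H" "cod T = H" unfolding T_def by simp_all

lemma piv_nf: "m \<odot> ((m \<odot> (p \<otimes> (S \<odot> S))) \<otimes> (S \<odot> p)) = \<iota>"
  using piv_raw by simp

lemma m_p_assoc: "ar V \<Longrightarrow> cod V = H \<boxtimes> H \<Longrightarrow> m \<odot> (p \<otimes> (m \<odot> V)) = m \<odot> (m \<otimes> \<iota>) \<odot> (p \<otimes> V)"
proof -
  assume a: "ar V" "cod V = H \<boxtimes> H"
  have "m \<odot> (p \<otimes> (m \<odot> V)) = m \<odot> (\<iota> \<otimes> m) \<odot> (p \<otimes> V)" using a by simp
  also have "\<dots> = m \<odot> (m \<otimes> \<iota>) \<odot> (p \<otimes> V)" using a by (subst m_assoc_k) simp_all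
  finally show ?thesis .
qed

lemma K1: "T \<odot> m = m \<odot> (T \<otimes> S) \<odot> \<sigma>"
proof -
  have "T \<odot> m = m \<odot> (p \<otimes> (S \<odot> m))" unfolding T_def by (simp add: ptc_l)
  also have "\<dots> = m \<odot> (p \<otimes> (m \<odot> ((S \<otimes> S) \<odot> \<sigma>)))" by (simp add: anti_mult)
  also have "\<dots> = m \<odot> (m \<otimes> \<iota>) \<odot> (p \<otimes> ((S \<otimes> S) \<odot> \<sigma>))" by (subst m_p_assoc) simp_all
  also have "\<dots> = m \<odot> (m \<otimes> \<iota>) \<odot> (p \<otimes> S \<otimes> S) \<odot> blk \<sigma>" by (subst ptc_l[symmetric]) (simp_all add: blk_def)
  also have "\<dots> = m \<odot> (T \<otimes> S) \<odot> \<sigma>" unfolding T_def by (simp add: blk_def)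
  finally show ?thesis .
qed

lemma natP: "ar A \<Longrightarrow> dom A = H \<Longrightarrow> cod A = H \<Longrightarrow> \<sigma> \<odot> (p \<otimes> A) = A \<otimes> p"
  "ar A \<Longrightarrow> dom A = H \<Longrightarrow> cod A = H \<Longrightarrow> \<sigma> \<odot> (A \<otimes> p) = p \<otimes> A"
  using sym_nat[of p A] sym_nat[of A p] by (simp_all add: sym_one sym_one_l)

lemma TS: "T \<odot> S = m \<odot> (p \<otimes> (S \<odot> S))" unfolding T_def by (simp add: ptc_l)

lemma TT[simp]: "T \<odot> T = \<iota>"
proof -
  have "T \<odot> T = T \<odot> (m \<odot> (p \<otimes> S))" by (subst (2) T_def) (rule refl)
  also have "\<dots> = (T \<odot> m) \<odot> (p \<otimes> S)" by simp
  also have "\<dots> = m \<odot> (T \<otimes> S) \<odot> \<sigma> \<odot> (p \<otimes> S)" unfolding K1 by simp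
  also have "\<dots> = m \<odot> ((T \<odot> S) \<otimes> (S \<odot> p))" by (simp add: natP)
  also have "\<dots> = \<iota>" unfolding TS by (rule piv_nf)
  finally show ?thesis .
qed

lemma TT_k[simp]: "ar k \<Longrightarrow> cod k = H \<Longrightarrow> T \<odot> T \<odot> k = k"
  by (simp flip: cmp_assoc)

lemma natI: "ar A \<Longrightarrow> dom A = H \<Longrightarrow> cod A = H \<Longrightarrow> \<sigma> \<odot> (\<iota> \<otimes> A) = (A \<otimes> \<iota>) \<odot> \<sigma>"
  "ar A \<Longrightarrow> dom A = H \<Longrightarrow> cod A = H \<Longrightarrow> \<sigma> \<odot> (A \<otimes> \<iota>) = (\<iota> \<otimes> A) \<odot> \<sigma>"
  using sym_nat[of \<iota> A] sym_nat[of A \<iota>] by simp_all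
lemma natI_k: "ar A \<Longrightarrow> dom A = H \<Longrightarrow> cod A = H \<Longrightarrow> ar k \<Longrightarrow> cod k = H \<boxtimes> H \<Longrightarrow> \<sigma> \<odot> (\<iota> \<otimes> A) \<odot> k = (A \<otimes> \<iota>) \<odot> \<sigma> \<odot> k"
  "ar A \<Longrightarrow> dom A = H \<Longrightarrow> cod A = H \<Longrightarrow> ar k \<Longrightarrow> cod k = H \<boxtimes> H \<Longrightarrow> \<sigma> \<odot> (A \<otimes> \<iota>) \<odot> k = (\<iota> \<otimes> A) \<odot> \<sigma> \<odot> k"
  by (simp_all flip: cmp_assoc add: natI)

definition Am where "Am = m \<odot> (\<iota> \<otimes> S) \<odot> \<sigma>"
lemma Am: "T \<odot> m \<odot> (\<iota> \<otimes> T) = Am"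
proof -
  have "T \<odot> m \<odot> (\<iota> \<otimes> T) = m \<odot> (T \<otimes> S) \<odot> \<sigma> \<odot> (\<iota> \<otimes> T)" by (simp flip: cmp_assoc add: K1)
  also have "\<dots> = Am" unfolding Am_def by (simp add: natI)
  finally show ?thesis .
qed

lemma bimon_k: "ar k \<Longrightarrow> cod k = H \<boxtimes> H \<Longrightarrow> D \<odot> m \<odot> k = (m \<otimes> m) \<odot> (\<iota> \<otimes> \<sigma> \<otimes> \<iota>) \<odot> (D \<otimes> D) \<odot> k"
  using bimon by (simp flip: cmp_assoc)

lemma K2: "D \<odot> T = \<sigma> \<odot> (T \<otimes> T) \<odot> D"
proof -
  define X where "X = \<sigma> \<odot> (S \<otimes> S) \<odot> D"
  have tX[simp]: "ar X" "dom X = H" "cod X = H \<boxtimes> H" unfolding X_def by simp_all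
  have "D \<odot> T = (m \<otimes> m) \<odot> (\<iota> \<otimes> \<sigma> \<otimes> \<iota>) \<odot> (D \<otimes> D) \<odot> (p \<otimes> S)"
    unfolding T_def by (simp add: bimon_k)
  also have "\<dots> = (m \<otimes> m) \<odot> (\<iota> \<otimes> \<sigma> \<otimes> \<iota>) \<odot> (p \<otimes> p \<otimes> X)"
    unfolding X_def by (simp add: D_p anti_comult)
  also have "(\<iota> \<otimes> \<sigma> \<otimes> \<iota>) \<odot> (p \<otimes> p \<otimes> X) = p \<otimes> ((\<sigma> \<otimes> \<iota>) \<odot> (p \<otimes> X))" by simp
  also have "p \<otimes> X = (p \<otimes> \<iota> \<otimes> \<iota>) \<odot> X" using pt_l[of X p] by simp
  also have "(\<sigma> \<otimes> \<iota>) \<odot> ((p \<otimes> \<iota> \<otimes> \<iota>) \<odot> X) = (\<iota> \<otimes> p \<otimes> \<iota>) \<odot> X" by (simp add: natP)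
  also have "p \<otimes> ((\<iota> \<otimes> p \<otimes> \<iota>) \<odot> X) = (p \<otimes> \<iota> \<otimes> p \<otimes> \<iota>) \<odot> X" by (simp add: ptc_l)
  also have "(m \<otimes> m) \<odot> ((p \<otimes> \<iota> \<otimes> p \<otimes> \<iota>) \<odot> X) = ((m \<odot> (p \<otimes> \<iota>)) \<otimes> (m \<odot> (p \<otimes> \<iota>))) \<odot> \<sigma> \<odot> (S \<otimes> S) \<odot> D"
    unfolding X_def by simp
  also have "\<dots> = \<sigma> \<odot> (T \<otimes> T) \<odot> D" unfolding T_def
    using sym_nat_k[of S S, simplified] sym_nat_k[of T T, simplified, unfolded T_def]
    by (simp add: ptc_l)
  finally show ?thesis .
qed

definition Bm where "Bm = \<sigma> \<odot> (\<iota> \<otimes> T) \<odot> D"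
lemma ty_AmBm[simp]: "ar Am" "dom Am = H \<boxtimes> H" "cod Am = H" "ar Bm" "dom Bm = H" "cod Bm = H \<boxtimes> H"
  unfolding Am_def Bm_def by simp_all

lemma Bm: "(\<iota> \<otimes> T) \<odot> D \<odot> T = Bm"
  unfolding Bm_def using K2 natI_k(2)[of T, symmetric] by simp

lemma L2: "((\<iota> \<otimes> T) \<odot> D \<odot> T) \<odot> (T \<odot> m \<odot> (\<iota> \<otimes> T)) =
  (m \<otimes> (T \<odot> m \<odot> (\<iota> \<otimes> T))) \<odot> (\<iota> \<otimes> \<sigma> \<otimes> \<iota>) \<odot> (D \<otimes> ((\<iota> \<otimes> T) \<odot> D \<odot> T))"
proof -
  have e1: "m \<otimes> (T \<odot> m \<odot> (\<iota> \<otimes> T)) = (\<iota> \<otimes> T) \<odot> (m \<otimes> m) \<odot> (\<iota> \<otimes> \<iota> \<otimes> \<iota> \<otimes> T)" by simp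
  have e2: "D \<otimes> ((\<iota> \<otimes> T) \<odot> D \<odot> T) = (\<iota> \<otimes> \<iota> \<otimes> \<iota> \<otimes> T) \<odot> (D \<otimes> D) \<odot> (\<iota> \<otimes> T)" by simp
  have e3: "ar k \<Longrightarrow> cod k = H \<boxtimes> H \<boxtimes> H \<boxtimes> H \<Longrightarrow>
     (\<iota> \<otimes> \<iota> \<otimes> \<iota> \<otimes> T) \<odot> (\<iota> \<otimes> \<sigma> \<otimes> \<iota>) \<odot> (\<iota> \<otimes> \<iota> \<otimes> \<iota> \<otimes> T) \<odot> k = (\<iota> \<otimes> \<sigma> \<otimes> \<iota>) \<odot> k" for k
    by simp
  show ?thesis unfolding e1 e2 by (simp del: ichgs add: e3 bimon_k)
qed

lemma L3: "Am \<odot> (\<iota> \<otimes> m) = m \<odot> (\<iota> \<otimes> Am) \<odot> (\<sigma> \<otimes> \<iota>)"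
proof -
  have natm: "\<sigma> \<odot> (\<iota> \<otimes> m) = (m \<otimes> \<iota>) \<odot> sym H (H \<boxtimes> H)" using sym_nat[of \<iota> m] by simp
  have "Am \<odot> (\<iota> \<otimes> m) = m \<odot> (\<iota> \<otimes> m) \<odot> (\<iota> \<otimes> \<iota> \<otimes> S) \<odot> sym H (H \<boxtimes> H)"
    unfolding Am_def by (subst m_assoc_k[symmetric]) (simp_all add: natm)
  also have "\<dots> = m \<odot> (\<iota> \<otimes> Am) \<odot> (\<sigma> \<otimes> \<iota>)"
    unfolding Am_def by (simp add: hexagon)
  finally show ?thesis .
qed

lemma L4: "(\<iota> \<otimes> Bm) \<odot> D = (\<sigma> \<otimes> \<iota>) \<odot> (\<iota> \<otimes> D) \<odot> Bm"
proof -
  have n2: "(\<iota> \<otimes> D) \<odot> \<sigma> = (\<sigma> \<otimes> \<iota>) \<odot> (\<iota> \<otimes> \<sigma>) \<odot> (D \<otimes> \<iota>)"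
    using natH2 by (simp add: hexagon2)
  have "(\<sigma> \<otimes> \<iota>) \<odot> (\<iota> \<otimes> D) \<odot> Bm = (\<sigma> \<otimes> \<iota>) \<odot> (\<sigma> \<otimes> \<iota>) \<odot> (\<iota> \<otimes> \<sigma>) \<odot> (D \<otimes> \<iota>) \<odot> (\<iota> \<otimes> T) \<odot> D"
    unfolding Bm_def using trail[OF n2] by (simp del: ichgs)
  also have "\<dots> = (\<iota> \<otimes> \<sigma>) \<odot> (D \<otimes> T) \<odot> D"
    by simp
  also have "\<dots> = (\<iota> \<otimes> \<sigma>) \<odot> (\<iota> \<otimes> \<iota> \<otimes> T) \<odot> blk ((D \<otimes> \<iota>) \<odot> D)"
    by (simp add: blk_def del: D3_fold D3_fold2)
  also have "\<dots> = (\<iota> \<otimes> (\<sigma> \<odot> (\<iota> \<otimes> T))) \<odot> D3"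
    by (simp add: blk_def)
  also have "\<dots> = (\<iota> \<otimes> Bm) \<odot> D"
    unfolding Bm_def by (simp add: D3_def D_coassoc del: D3_fold D3_fold2)
  finally show ?thesis ..
qed

end


context smc begin
lemma sym_inv_k: "ob a \<Longrightarrow> ob b \<Longrightarrow> ar k \<Longrightarrow> cod k = a \<boxtimes> b \<Longrightarrow> sym b a \<odot> sym a b \<odot> k = k"
  by (simp flip: cmp_assoc)
lemma natL: "ar t \<Longrightarrow> ob a \<Longrightarrow> ob b \<Longrightarrow> cod t = b \<Longrightarrow> sym a b \<odot> (idm a \<otimes> t) = (t \<otimes> idm a) \<odot> sym a (dom t)"
  using sym_nat[of "idm a" t] by simp
lemma natL_k: "ar t \<Longrightarrow> ob a \<Longrightarrow> ob b \<Longrightarrow> cod t = b \<Longrightarrow> ar k \<Longrightarrow> cod k = a \<boxtimes> dom t \<Longrightarrow>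
  sym a b \<odot> (idm a \<otimes> t) \<odot> k = (t \<otimes> idm a) \<odot> sym a (dom t) \<odot> k"
proof -
  assume a: "ar t" "ob a" "ob b" "cod t = b" "ar k" "cod k = a \<boxtimes> dom t"
  have "(sym a b \<odot> (idm a \<otimes> t)) \<odot> k = (t \<otimes> idm a) \<odot> (sym a (dom t) \<odot> k)"
    by (rule trail[OF natL]) (use a in simp_all)
  thus ?thesis using a by simp
qed
end

locale edge = hopf C H m u D e S for C :: "('o, 'm) smcat" and H m u D e S +
  fixes X Y :: 'o
  assumes obX[simp]: "ob X" and obY[simp]: "ob Y"
begin

definition W where "W A B \<phi> = (sym X B \<otimes> \<iota> \<otimes> idm Y) \<odot> (idm X \<otimes> \<phi> \<otimes> idm Y) \<odot> (sym A X \<otimes> \<iota> \<otimes> idm Y)"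

abbreviation "ty \<phi> A B \<equiv> ar \<phi> \<and> dom \<phi> = A \<boxtimes> H \<and> cod \<phi> = B \<boxtimes> H \<and> ob A \<and> ob B"

lemma W_ty[simp]: "ty \<phi> A B \<Longrightarrow> ar (W A B \<phi>)" "ty \<phi> A B \<Longrightarrow> dom (W A B \<phi>) = A \<boxtimes> X \<boxtimes> H \<boxtimes> Y"
  "ty \<phi> A B \<Longrightarrow> cod (W A B \<phi>) = B \<boxtimes> X \<boxtimes> H \<boxtimes> Y"
  unfolding W_def by simp_all

lemma W1: "ty \<phi> A B \<Longrightarrow> ty \<psi> B B' \<Longrightarrow> W B B' \<psi> \<odot> W A B \<phi> = W A B' (\<psi> \<odot> \<phi>)"
  unfolding W_def by (simp add: sym_inv_k)

lemma W2: "ar \<theta> \<Longrightarrow> ob A \<Longrightarrow> ob B \<Longrightarrow> dom \<theta> = A \<Longrightarrow> cod \<theta> = B \<Longrightarrow> \<theta> \<otimes> idm X \<otimes> \<iota> \<otimes> idm Y = W A B (\<theta> \<otimes> \<iota>)"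
  unfolding W_def by (simp add: natL_k sym_inv_k)

lemma W3: "ar \<theta> \<Longrightarrow> ob Cc \<Longrightarrow> ob Dd \<Longrightarrow> dom \<theta> = Cc \<Longrightarrow> cod \<theta> = Dd \<Longrightarrow> ty \<phi> A B \<Longrightarrow>
  \<theta> \<otimes> W A B \<phi> = W (Cc \<boxtimes> A) (Dd \<boxtimes> B) (\<theta> \<otimes> \<phi>)"
proof -
  assume a: "ar \<theta>" "ob Cc" "ob Dd" "dom \<theta> = Cc" "cod \<theta> = Dd" "ty \<phi> A B"
  have "W (Cc \<boxtimes> A) (Dd \<boxtimes> B) (\<theta> \<otimes> \<phi>) =
    (((idm Dd \<otimes> sym X B) \<odot> (sym X Dd \<otimes> idm B)) \<otimes> \<iota> \<otimes> idm Y) \<odot> (idm X \<otimes> \<theta> \<otimes> \<phi> \<otimes> idm Y) \<odot>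
    (((sym Cc X \<otimes> idm A) \<odot> (idm Cc \<otimes> sym A X)) \<otimes> \<iota> \<otimes> idm Y)"
    unfolding W_def using a by (simp add: hexagon hexagon2 del: id_split)
  also have "\<dots> = (idm Dd \<otimes> sym X B \<otimes> \<iota> \<otimes> idm Y) \<odot> (sym X Dd \<otimes> idm B \<otimes> \<iota> \<otimes> idm Y) \<odot> (idm X \<otimes> \<theta> \<otimes> \<phi> \<otimes> idm Y) \<odot>
    (sym Cc X \<otimes> idm A \<otimes> \<iota> \<otimes> idm Y) \<odot> (idm Cc \<otimes> sym A X \<otimes> \<iota> \<otimes> idm Y)"
    using a by (simp add: split_l_k split_l del: ichgs)
  also have "\<dots> = \<theta> \<otimes> W A B \<phi>"
    unfolding W_def using a by (simp add: natL_k sym_inv_k)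
  finally show ?thesis ..
qed

lemma W2s: "ar \<theta> \<Longrightarrow> \<theta> \<otimes> idm X \<otimes> \<iota> \<otimes> idm Y = W (dom \<theta>) (cod \<theta>) (\<theta> \<otimes> \<iota>)"
  by (rule W2) simp_all
lemma W3s: "ar \<theta> \<Longrightarrow> ty \<phi> A B \<Longrightarrow> \<theta> \<otimes> W A B \<phi> = W (dom \<theta> \<boxtimes> A) (cod \<theta> \<boxtimes> B) (\<theta> \<otimes> \<phi>)"
  by (rule W3) simp_all
lemma W1k: "ty \<phi> A B \<Longrightarrow> ty \<psi> B B' \<Longrightarrow> ar k \<Longrightarrow> cod k = A \<boxtimes> X \<boxtimes> H \<boxtimes> Y \<Longrightarrow> W B B' \<psi> \<odot> W A B \<phi> \<odot> k = W A B' (\<psi> \<odot> \<phi>) \<odot> k"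
  by (simp flip: cmp_assoc add: W1)

lemmas Wrules = W1 W1k W2s W3s

lemma E1: "ar f \<Longrightarrow> dom f = H \<boxtimes> H \<Longrightarrow> cod f = H \<Longrightarrow> ar g \<Longrightarrow> dom g = H \<Longrightarrow> cod g = H \<boxtimes> H \<Longrightarrow>
  g \<odot> f = (m \<otimes> f) \<odot> (\<iota> \<otimes> \<sigma> \<otimes> \<iota>) \<odot> (D \<otimes> g) \<Longrightarrow>
  W one H g \<odot> W H one f = (m \<otimes> W H one f) \<odot> (\<iota> \<otimes> \<sigma> \<otimes> idm (X \<boxtimes> H \<boxtimes> Y)) \<odot> (D \<otimes> W one H g)"
  by (simp add: Wrules)

lemma E2: "ar f1 \<Longrightarrow> dom f1 = H \<boxtimes> H \<Longrightarrow> cod f1 = H \<Longrightarrow> ar f2 \<Longrightarrow> dom f2 = H \<boxtimes> H \<Longrightarrow> cod f2 = H \<Longrightarrow>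
  f2 \<odot> (\<iota> \<otimes> f1) = f1 \<odot> (\<iota> \<otimes> f2) \<odot> (\<sigma> \<otimes> \<iota>) \<Longrightarrow>
  W H one f2 \<odot> (\<iota> \<otimes> W H one f1) = W H one f1 \<odot> (\<iota> \<otimes> W H one f2) \<odot> (\<sigma> \<otimes> idm (X \<boxtimes> H \<boxtimes> Y))"
  by (simp add: Wrules)

lemma E3: "ar g1 \<Longrightarrow> dom g1 = H \<Longrightarrow> cod g1 = H \<boxtimes> H \<Longrightarrow> ar g2 \<Longrightarrow> dom g2 = H \<Longrightarrow> cod g2 = H \<boxtimes> H \<Longrightarrow>
  (\<iota> \<otimes> g2) \<odot> g1 = (\<sigma> \<otimes> \<iota>) \<odot> (\<iota> \<otimes> g1) \<odot> g2 \<Longrightarrow>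
  (\<iota> \<otimes> W one H g2) \<odot> W one H g1 = (\<sigma> \<otimes> idm (X \<boxtimes> H \<boxtimes> Y)) \<odot> (\<iota> \<otimes> W one H g1) \<odot> W one H g2"
  by (simp add: Wrules)

end


lemma epos_less: "a \<in> set es \<Longrightarrow> epos es a < length es"
  unfolding epos_def by (induct es) auto

context smc begin
lemma tpow_ob[simp]: "ob H \<Longrightarrow> ob (tpow C H n)"
  by (induct n) simp_all
lemma tpow_add: "ob H \<Longrightarrow> tpow C H a \<boxtimes> tpow C H b = tpow C H (a + b)"
  by (induct a) simp_all
lemma tpowE_split: "ob H \<Longrightarrow> a \<in> set es \<Longrightarrow> tpowE C H es = befE C H es a \<boxtimes> H \<boxtimes> aftE C H es a"
proof -
  assume h: "ob H" "a \<in> set es"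
  define k where "k = epos es a"
  define n where "n = length es - epos es a - 1"
  have L: "length es = k + Suc n" using epos_less[OF h(2)] unfolding k_def n_def by simp
  have "tpowE C H es = tpow C H (k + Suc n)" unfolding tpowE_def by (simp only: L)
  also have "\<dots> = tpow C H k \<boxtimes> tpow C H (Suc n)" using h by (simp only: tpow_add)
  also have "\<dots> = befE C H es a \<boxtimes> H \<boxtimes> aftE C H es a"
    unfolding befE_def aftE_def k_def n_def by (simp only: tpow.simps)
  finally show ?thesis .
qed
end

context edge begin
lemma act_W: "ar f \<Longrightarrow> dom f = H \<boxtimes> H \<Longrightarrow> cod f = H \<Longrightarrow>
   (idm X \<otimes> f \<otimes> idm Y) \<odot> (sym H X \<otimes> idm (H \<boxtimes> Y)) = W H one f"
  unfolding W_def by (simp add: sym_one)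
lemma coact_W: "ar g \<Longrightarrow> dom g = H \<Longrightarrow> cod g = H \<boxtimes> H \<Longrightarrow>
   (sym X H \<otimes> idm (H \<boxtimes> Y)) \<odot> (idm X \<otimes> g \<otimes> idm Y) = W one H g"
  unfolding W_def by (simp add: sym_one_l)
end

theorem lemma5p2:
  fixes C :: "('o, 'm) smcat" and H :: 'o and m u D e S p :: 'm
    and es :: "'e list" and \<alpha> :: 'e
  assumes "strict_smc C"
    and "pivotal_hopf C H m u D e S p"
    and "distinct es" and "\<alpha> \<in> set es"
  shows "ll_hopf_module C H m D (tpowE C H es) (act_plus C H m es \<alpha>) (coact_plus C H D es \<alpha>)
       \<and> ll_hopf_module C H m D (tpowE C H es) (act_minus C H m S p es \<alpha>) (coact_minus C H m D S p es \<alpha>)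
       \<and> c_cmp C (act_minus C H m S p es \<alpha>) (c_tar C (c_id C H) (act_plus C H m es \<alpha>)) =
         c_cmp C (act_plus C H m es \<alpha>)
           (c_cmp C (c_tar C (c_id C H) (act_minus C H m S p es \<alpha>))
                    (c_tar C (c_sym C H H) (c_id C (tpowE C H es))))
       \<and> c_cmp C (c_tar C (c_id C H) (coact_minus C H m D S p es \<alpha>)) (coact_plus C H D es \<alpha>) =
         c_cmp C (c_tar C (c_sym C H H) (c_id C (tpowE C H es)))
           (c_cmp C (c_tar C (c_id C H) (coact_plus C H D es \<alpha>)) (coact_minus C H m D S p es \<alpha>))"
proof -
  interpret piv C H m u D e S p
    using assms(1,2) unfolding piv_def piv_axioms_def hopf_def hopf_axioms_def smc_def pivotal_hopf_def by simp
  define X where "X = befE C H es \<alpha>"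
  define Y where "Y = aftE C H es \<alpha>"
  interpret edge C H m u D e S X Y
    by unfold_locales (simp_all add: X_def Y_def befE_def aftE_def)
  have M: "tpowE C H es = X \<boxtimes> H \<boxtimes> Y" unfolding X_def Y_def by (rule tpowE_split) (simp_all add: assms(4))
  have PT: "pivT C m S p = T" unfolding pivT_def T_def ..
  have AP: "act_plus C H m es \<alpha> = W H one m"
    unfolding act_plus_def edge_act_def Let_def X_def[symmetric] Y_def[symmetric] by (rule act_W) simp_all
  have AM: "act_minus C H m S p es \<alpha> = W H one Am"
    unfolding act_minus_def edge_act_def Let_def X_def[symmetric] Y_def[symmetric] PT Am[symmetric]
    by (rule act_W) simp_all
  have CP: "coact_plus C H D es \<alpha> = W one H D"
    unfolding coact_plus_def edge_coact_def Let_def X_def[symmetric] Y_def[symmetric] by (rule coact_W) simp_all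
  have CM: "coact_minus C H m D S p es \<alpha> = W one H Bm"
    unfolding coact_minus_def edge_coact_def Let_def X_def[symmetric] Y_def[symmetric] PT Bm[symmetric]
    by (rule coact_W) simp_all
  have 1: "ll_hopf_module C H m D (tpowE C H es) (act_plus C H m es \<alpha>) (coact_plus C H D es \<alpha>)"
    unfolding ll_hopf_module_def M AP CP by (rule E1) (simp_all add: bimon)
  have 2: "ll_hopf_module C H m D (tpowE C H es) (act_minus C H m S p es \<alpha>) (coact_minus C H m D S p es \<alpha>)"
    unfolding ll_hopf_module_def M AM CM by (rule E1) (simp_all add: L2[unfolded Am Bm])
  have 3: "c_cmp C (act_minus C H m S p es \<alpha>) (c_tar C (c_id C H) (act_plus C H m es \<alpha>)) =
         c_cmp C (act_plus C H m es \<alpha>)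
           (c_cmp C (c_tar C (c_id C H) (act_minus C H m S p es \<alpha>))
                    (c_tar C (c_sym C H H) (c_id C (tpowE C H es))))"
    unfolding M AM AP by (rule E2) (simp_all add: L3)
  have 4: "c_cmp C (c_tar C (c_id C H) (coact_minus C H m D S p es \<alpha>)) (coact_plus C H D es \<alpha>) =
         c_cmp C (c_tar C (c_sym C H H) (c_id C (tpowE C H es)))
           (c_cmp C (c_tar C (c_id C H) (coact_plus C H D es \<alpha>)) (coact_minus C H m D S p es \<alpha>))"
    unfolding M CM CP by (rule E3) (simp_all add: L4)
  from 1 2 3 4 show ?thesis by blast
qed


end
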